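(* Let $U\subseteq\mathbb{R}^n$ be an $n$-dimensional compact convex set, and let $x_0,\ldots,x_n\in\partial U$ be affinely independent (so they are the vertices of an $n$-simplex). Then for each $u\in U$ there exists $m\in\{0,\ldots,n\}$ such that the straight line $\ell_{u,x_m}$ through $u$ and $x_m$ intersects the affine hull $\mathrm{aff}(\{x_0,\ldots,x_n\}\setminus\{x_m\})$ at a point of $U$. *)

theory Defs
  imports "HOL-Analysis.Analysis"
begin

end

theory Submission
  imports Defs
begin

theorem lemma6p2:
  fixes U :: "'a::euclidean_space set" and x :: "nat \<Rightarrow> 'a" and u :: 'a
  assumes "compact U" and "convex U" and "aff_dim U = int DIM('a)"
    and "\<And>i. i \<in> {0..DIM('a)} \<Longrightarrow> x i \<in> frontier U"
    and "inj_on x {0..DIM('a)}"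
    and "\<not> affine_dependent (x ` {0..DIM('a)})"
    and "u \<in> U"
  shows "\<exists>m \<in> {0..DIM('a)}. \<exists>p \<in> U.
           p \<in> affine hull {u, x m} \<and> p \<in> affine hull (x ` ({0..DIM('a)} - {m}))"
proof -
  define I where "I = {0..DIM('a)}"
  have fI: "finite I" by (simp add: I_def)
  have cardI: "card I = DIM('a) + 1" by (simp add: I_def)
  have inj: "inj_on x I" using assms(5) by (simp add: I_def)
  have xU: "x i \<in> U" if "i \<in> I" for i
    using assms(4)[of i] that \<open>compact U\<close> compact_imp_closed frontier_subset_closed
    by (auto simp: I_def)
  have "card (x ` I) = DIM('a) + 1" using inj cardI by (simp add: card_image)
  then have "aff_dim (x ` I) = int DIM('a)"
    using aff_dim_affine_independent[of "x ` I"] assms(6) by (simp add: I_def)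
  then have "affine hull (x ` I) = UNIV" by (simp add: aff_dim_eq_full)
  then have "u \<in> affine hull (x ` I)" by simp
  then obtain w where w1: "sum w (x ` I) = 1" and wu: "(\<Sum>v\<in>x ` I. w v *\<^sub>R v) = u"
    using affine_hull_finite[of "x ` I"] fI by auto
  define c where "c = w \<circ> x"
  have c1: "sum c I = 1" using w1 inj by (simp add: sum.reindex c_def)
  have cu: "(\<Sum>i\<in>I. c i *\<^sub>R x i) = u" using wu inj by (simp add: sum.reindex c_def)
  have Ine: "I \<noteq> {}" by (simp add: I_def)
  have "Min (c ` I) \<in> c ` I" using fI Ine by simp
  then obtain m where mI: "m \<in> I" and mdef: "c m = Min (c ` I)" by auto
  have mmin: "\<And>i. i \<in> I \<Longrightarrow> c m \<le> c i" using fI mdef by simp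
  have cm1: "c m < 1"
  proof (rule ccontr)
    assume "\<not> c m < 1"
    then have "\<And>i. i \<in> I \<Longrightarrow> 1 \<le> c i" using mmin by force
    then have "sum (\<lambda>_. 1) I \<le> sum c I" by (intro sum_mono) auto
    then show False using c1 cardI by simp
  qed
  define s where "s = 1 - c m"
  have s0: "s > 0" using cm1 by (simp add: s_def)
  define p where "p = (1 / s) *\<^sub>R u + (- c m / s) *\<^sub>R x m"
  have usplit: "u = c m *\<^sub>R x m + (\<Sum>i\<in>I-{m}. c i *\<^sub>R x i)"
    using sum.remove[OF fI mI, of "\<lambda>i. c i *\<^sub>R x i"] cu by simp
  have csplit: "1 = c m + sum c (I-{m})" using sum.remove[OF fI mI, of c] c1 by simp
  have pdef2: "p = (\<Sum>i\<in>I-{m}. (c i / s) *\<^sub>R x i)"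
  proof -
    have "p = (1/s) *\<^sub>R (u - c m *\<^sub>R x m)"
      by (simp add: p_def algebra_simps divide_inverse)
    also have "\<dots> = (1/s) *\<^sub>R (\<Sum>i\<in>I-{m}. c i *\<^sub>R x i)" using usplit by simp
    also have "\<dots> = (\<Sum>i\<in>I-{m}. (c i / s) *\<^sub>R x i)"
      by (simp add: scaleR_sum_right divide_inverse mult.commute)
    finally show ?thesis .
  qed
  have pA: "p \<in> affine hull {u, x m}"
  proof -
    have "(1/s) + (- c m / s) = 1" using s0 by (simp add: s_def field_simps)
    then show ?thesis unfolding affine_hull_2 p_def by blast
  qed
  have sumI': "sum (\<lambda>i. c i / s) (I - {m}) = 1"
    using csplit s0 by (simp add: sum_divide_distrib[symmetric] s_def)
  have injm: "inj_on x (I - {m})" using inj by (rule inj_on_subset) auto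
  have pB: "p \<in> affine hull (x ` (I - {m}))"
  proof -
    define d where "d v = w v / s" for v
    have "sum d (x ` (I - {m})) = 1"
      using sumI' injm by (simp add: sum.reindex d_def c_def)
    moreover have "(\<Sum>v\<in>x ` (I - {m}). d v *\<^sub>R v) = p"
      using pdef2 injm by (simp add: sum.reindex d_def c_def)
    ultimately show ?thesis
      using affine_hull_finite[of "x ` (I - {m})"] fI by auto
  qed
  have pU: "p \<in> U"
  proof (cases "c m \<le> 0")
    case True
    have "(1/s) + (- c m / s) = 1" using s0 by (simp add: s_def field_simps)
    moreover have "0 \<le> 1/s" "0 \<le> - c m / s" using s0 True by (auto simp: divide_nonpos_pos)
    ultimately show ?thesis unfolding p_def
      using convexD[OF assms(2) assms(7) xU[OF mI]] by blast
  next
    case False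
    have "(\<Sum>i\<in>I-{m}. (c i / s) *\<^sub>R x i) \<in> U"
    proof (rule convex_sum[OF _ assms(2)])
      show "finite (I - {m})" using fI by simp
      show "sum (\<lambda>i. c i / s) (I - {m}) = 1" by (rule sumI')
      show "\<And>i. i \<in> I - {m} \<Longrightarrow> 0 \<le> c i / s" using False mmin s0
        by (metis DiffD1 divide_nonneg_pos linorder_le_cases order_trans)
      show "\<And>i. i \<in> I - {m} \<Longrightarrow> x i \<in> U" using xU by auto
    qed
    then show ?thesis using pdef2 by simp
  qed
  show ?thesis using mI pU pA pB unfolding I_def by blast
qed

end
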